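(* Let $\rho_X,\rho_Z\in(0,1/2)$ and let $C\sim\mathrm{CSS}_n(\rho_X,\rho_Z)$ be a random CSS code. There exists a constant $c_0>0$ such that with probability $1-2^{-\Omega(n)}$, there exists a decoder $\operatorname{Dec}_{C,Y}^Z$ that corrects all $Z$-errors $e$ of $C$ of $Y$-weight $|e|_Y\le c_0n/\log n$.
   Context: $\mathrm{CSS}_n(\rho_X,\rho_Z)$: choose $H_Z\in\mathbb{F}_2^{\rho_Zn\times n}$ uniformly at random, then $H_X\in\mathbb{F}_2^{\rho_Xn\times n}$ uniformly among matrices with $H_XH_Z^{\mathrm T}=0$; $C=(H_X,H_Z)$. Let $S_Z$ be the rows of $H_Z$; for $i\in[n]$, $Y_C^i$ is the set of vectors obtained from some $s\in S_Z$ by setting all entries of index greater than $i$ to zero, and $Y_C=\bigcup_iY_C^i$. The $Y$-weight $|w|_Y$ is the minimum size of a subset of $Y_C$ summing to $w$. A decoder maps a syndrome $\sigma\in\mathbb{F}_2^{\rho_Xn}$ to $\hat f\in\mathbb{F}_2^n$ with $H_X\hat f=\sigma$; it corrects $e$ if $e+\hat f\in\mathrm{row}(H_Z)$ when given $\sigma=H_Xe$. *)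

theory Defs
  imports "HOL-Probability.Probability" "HOL-Library.FuncSet"
begin

text \<open>Vectors in F_2^n are represented as subsets of {..<n} (their supports, 0-indexed);
  addition is symmetric difference. A matrix with m rows is a function from
  {..<m} to row vectors (extensional outside {..<m}).\<close>

definition vadd :: "nat set \<Rightarrow> nat set \<Rightarrow> nat set" where
  "vadd a b = (a - b) \<union> (b - a)"

definition xsum :: "'a set \<Rightarrow> ('a \<Rightarrow> nat set) \<Rightarrow> nat set" where
  "xsum A f = {j. odd (card {a \<in> A. j \<in> f a})}"

definition mats :: "nat \<Rightarrow> nat \<Rightarrow> (nat \<Rightarrow> nat set) set" where
  "mats m n = {..<m} \<rightarrow>\<^sub>E Pow {..<n}"

definition orth :: "nat set \<Rightarrow> nat set \<Rightarrow> bool" where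
  "orth a b = even (card (a \<inter> b))"

definition compat :: "nat \<Rightarrow> nat \<Rightarrow> (nat \<Rightarrow> nat set) \<Rightarrow> (nat \<Rightarrow> nat set) \<Rightarrow> bool" where
  "compat mX mZ HX HZ = (\<forall>i<mX. \<forall>j<mZ. orth (HX i) (HZ j))"

definition nrows :: "real \<Rightarrow> nat \<Rightarrow> nat" where
  "nrows \<rho> n = nat \<lfloor>\<rho> * real n\<rfloor>"

definition CSS :: "nat \<Rightarrow> real \<Rightarrow> real \<Rightarrow> ((nat \<Rightarrow> nat set) \<times> (nat \<Rightarrow> nat set)) pmf" where
  "CSS n \<rho>X \<rho>Z =
     do { HZ \<leftarrow> pmf_of_set (mats (nrows \<rho>Z n) n);
          HX \<leftarrow> pmf_of_set {HX \<in> mats (nrows \<rho>X n) n. compat (nrows \<rho>X n) (nrows \<rho>Z n) HX HZ};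
          return_pmf (HX, HZ) }"

definition syndrome :: "nat \<Rightarrow> (nat \<Rightarrow> nat set) \<Rightarrow> nat set \<Rightarrow> nat set" where
  "syndrome mX HX e = {i. i < mX \<and> odd (card (HX i \<inter> e))}"

definition rowspace :: "nat \<Rightarrow> (nat \<Rightarrow> nat set) \<Rightarrow> nat set set" where
  "rowspace mZ HZ = {xsum S HZ | S. S \<subseteq> {..<mZ}}"

text \<open>Y_C = union over i in [n] of truncations of rows of H_Z to the first i coordinates
  (0-indexed coordinates < i).\<close>
definition Yset :: "nat \<Rightarrow> nat \<Rightarrow> (nat \<Rightarrow> nat set) \<Rightarrow> nat set set" where
  "Yset n mZ HZ = {HZ j \<inter> {..<i} | j i. j < mZ \<and> 1 \<le> i \<and> i \<le> n}"

text \<open>Y-weight: minimum size of a subset of Y_C summing to w (infinity if none).\<close>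
definition Yweight :: "nat \<Rightarrow> nat \<Rightarrow> (nat \<Rightarrow> nat set) \<Rightarrow> nat set \<Rightarrow> enat" where
  "Yweight n mZ HZ w =
     (INF T \<in> {T. T \<subseteq> Yset n mZ HZ \<and> finite T \<and> xsum T id = w}. enat (card T))"

definition is_decoder :: "nat \<Rightarrow> nat \<Rightarrow> (nat \<Rightarrow> nat set) \<Rightarrow> (nat set \<Rightarrow> nat set) \<Rightarrow> bool" where
  "is_decoder n mX HX Dec =
     (\<forall>e \<subseteq> {..<n}. Dec (syndrome mX HX e) \<subseteq> {..<n} \<and>
        syndrome mX HX (Dec (syndrome mX HX e)) = syndrome mX HX e)"

definition corrects :: "nat \<Rightarrow> nat \<Rightarrow> (nat \<Rightarrow> nat set) \<Rightarrow> (nat \<Rightarrow> nat set) \<Rightarrow> (nat set \<Rightarrow> nat set) \<Rightarrow> nat set \<Rightarrow> bool" where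
  "corrects mX mZ HX HZ Dec e = (vadd e (Dec (syndrome mX HX e)) \<in> rowspace mZ HZ)"

end

theory Submission
  imports Defs
begin

lemma card_vadd_parity:
  assumes "finite r"
  shows "card (r \<inter> vadd a b) + 2 * card (r \<inter> a \<inter> b) = card (r \<inter> a) + card (r \<inter> b)"
proof -
  have e1: "r \<inter> vadd a b = (r \<inter> a - b) \<union> (r \<inter> b - a)" by (auto simp: vadd_def)
  have c1: "card (r \<inter> vadd a b) = card (r \<inter> a - b) + card (r \<inter> b - a)"
    unfolding e1 by (rule card_Un_disjoint) (use assms in auto)
  have c2: "card (r \<inter> a) = card (r \<inter> a - b) + card (r \<inter> a \<inter> b)"
  proof -
    have "r \<inter> a = (r \<inter> a - b) \<union> (r \<inter> a \<inter> b)" by auto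
    moreover have "(r \<inter> a - b) \<inter> (r \<inter> a \<inter> b) = {}" by auto
    ultimately show ?thesis using assms by (metis card_Un_disjoint finite_Diff finite_Int)
  qed
  have c3: "card (r \<inter> b) = card (r \<inter> b - a) + card (r \<inter> a \<inter> b)"
  proof -
    have "r \<inter> b = (r \<inter> b - a) \<union> (r \<inter> a \<inter> b)" by auto
    moreover have "(r \<inter> b - a) \<inter> (r \<inter> a \<inter> b) = {}" by auto
    ultimately show ?thesis using assms by (metis card_Un_disjoint finite_Diff finite_Int)
  qed
  show ?thesis using c1 c2 c3 by simp
qed

lemma orth_vadd: "finite r \<Longrightarrow> orth r (vadd a b) = (orth r a = orth r b)"
  unfolding orth_def using card_vadd_parity[of r a b] by presburger

lemma orth_sym: "orth a b = orth b a"
  unfolding orth_def by (simp add: Int_commute)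

lemma vadd_comm: "vadd a b = vadd b a" unfolding vadd_def by auto
lemma vadd_cancel: "vadd (vadd a b) b = a" unfolding vadd_def by auto
lemma vadd_sub: "a \<subseteq> X \<Longrightarrow> b \<subseteq> X \<Longrightarrow> vadd a b \<subseteq> X" unfolding vadd_def by auto

lemma xsum_empty: "xsum {} f = {}" unfolding xsum_def by simp

lemma xsum_insert:
  assumes "finite S" "a \<notin> S"
  shows "xsum (insert a S) f = vadd (f a) (xsum S f)"
proof -
  have "\<And>j. card {x \<in> insert a S. j \<in> f x} = card {x \<in> S. j \<in> f x} + (if j \<in> f a then 1 else 0)"
  proof -
    fix j
    show "card {x \<in> insert a S. j \<in> f x} = card {x \<in> S. j \<in> f x} + (if j \<in> f a then 1 else 0)"
    proof (cases "j \<in> f a")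
      case True
      then have "{x \<in> insert a S. j \<in> f x} = insert a {x \<in> S. j \<in> f x}" by auto
      then show ?thesis using True assms by simp
    next
      case False
      then have "{x \<in> insert a S. j \<in> f x} = {x \<in> S. j \<in> f x}" by auto
      then show ?thesis using False by simp
    qed
  qed
  then show ?thesis unfolding xsum_def vadd_def by auto
qed

lemma xsum_sub: "T \<subseteq> Pow X \<Longrightarrow> xsum T id \<subseteq> X"
proof
  fix j assume T: "T \<subseteq> Pow X" and j: "j \<in> xsum T id"
  then have "card {a \<in> T. j \<in> a} \<noteq> 0" unfolding xsum_def by (auto dest: odd_pos)
  then have "{a \<in> T. j \<in> a} \<noteq> {}" by (metis card.empty)
  then show "j \<in> X" using T by auto
qed

lemma perp_exists:
  assumes "\<forall>j<m. HZ j \<subseteq> {..<n}" "w \<subseteq> {..<n}" "w \<notin> rowspace m HZ"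
  shows "\<exists>r \<subseteq> {..<n}. (\<forall>j<m. orth r (HZ j)) \<and> \<not> orth r w"
  using assms
proof (induction m arbitrary: w)
  case 0
  have "rowspace 0 HZ = {{}}" unfolding rowspace_def by (auto simp: xsum_empty)
  then have "w \<noteq> {}" using 0 by auto
  then obtain x where x: "x \<in> w" by auto
  then have "\<not> orth {x} w" unfolding orth_def by simp
  moreover have "{x} \<subseteq> {..<n}" using x 0 by auto
  ultimately show ?case by blast
next
  case (Suc m)
  have h: "\<forall>j<m. HZ j \<subseteq> {..<n}" using Suc by auto
  have n1: "w \<notin> rowspace m HZ" using Suc.prems(3) unfolding rowspace_def by fastforce
  have n2: "vadd w (HZ m) \<notin> rowspace m HZ"
  proof
    assume "vadd w (HZ m) \<in> rowspace m HZ"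
    then obtain S where S: "S \<subseteq> {..<m}" "vadd w (HZ m) = xsum S HZ" unfolding rowspace_def by auto
    have fS: "finite S" using S finite_subset by blast
    have "xsum (insert m S) HZ = vadd (HZ m) (vadd w (HZ m))" using xsum_insert[OF fS, of m HZ] S by auto
    also have "\<dots> = w" by (metis vadd_cancel vadd_comm)
    finally have "w \<in> rowspace (Suc m) HZ" unfolding rowspace_def using S by (metis (mono_tags, lifting) insert_subset lessThan_Suc lessThan_iff mem_Collect_eq subset_insertI2 lessI) 
    then show False using Suc.prems(3) by simp
  qed
  have wsub2: "vadd w (HZ m) \<subseteq> {..<n}" using Suc.prems by (intro vadd_sub) auto
  obtain r1 where r1: "r1 \<subseteq> {..<n}" "\<forall>j<m. orth r1 (HZ j)" "\<not> orth r1 w"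
    using Suc.IH[OF h Suc.prems(2) n1] by blast
  obtain r2 where r2: "r2 \<subseteq> {..<n}" "\<forall>j<m. orth r2 (HZ j)" "\<not> orth r2 (vadd w (HZ m))"
    using Suc.IH[OF h wsub2 n2] by blast
  have f1: "finite r1" "finite r2" using r1(1) r2(1) finite_subset by blast+
  show ?case
  proof (cases "orth r1 (HZ m)")
    case True
    then show ?thesis using r1 by (auto simp: less_Suc_eq)
  next
    case F1: False
    show ?thesis
    proof (cases "orth r2 (HZ m)")
      case True
      then show ?thesis using r2 orth_vadd[OF f1(2), of w "HZ m"] by (auto simp: less_Suc_eq)
    next
      case False
      let ?r = "vadd r1 r2"
      have fw: "finite w" using Suc.prems(2) finite_subset by blast
      have ow: "orth r2 w" using False r2 orth_vadd[OF f1(2), of w "HZ m"] by auto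
      have "\<forall>j<Suc m. orth ?r (HZ j)"
      proof (intro allI impI)
        fix j assume "j < Suc m"
        have fj: "finite (HZ j)" using Suc.prems(1) \<open>j < Suc m\<close> finite_subset by blast
        have "orth ?r (HZ j) = orth (HZ j) ?r" by (rule orth_sym)
        also have "\<dots> = (orth (HZ j) r1 = orth (HZ j) r2)" by (rule orth_vadd[OF fj])
        finally show "orth ?r (HZ j)" using \<open>j < Suc m\<close> r1 r2 F1 False
          by (metis less_Suc_eq orth_sym)
      qed
      moreover have "\<not> orth ?r w"
        using orth_vadd[OF fw, of r1 r2] r1 ow by (metis orth_sym)
      moreover have "?r \<subseteq> {..<n}" using r1 r2 by (intro vadd_sub)
      ultimately show ?thesis by blast
    qed
  qed
qed

definition Vs :: "nat \<Rightarrow> nat \<Rightarrow> (nat \<Rightarrow> nat set) \<Rightarrow> nat set set" where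
  "Vs n m HZ = {r. r \<subseteq> {..<n} \<and> (\<forall>j<m. orth r (HZ j))}"

lemma half_count:
  assumes "\<forall>j<m. HZ j \<subseteq> {..<n}" "w \<subseteq> {..<n}" "w \<notin> rowspace m HZ"
  shows "card (Vs n m HZ) = 2 * card {r \<in> Vs n m HZ. orth r w}"
proof -
  obtain r0 where r0: "r0 \<subseteq> {..<n}" "\<forall>j<m. orth r0 (HZ j)" "\<not> orth r0 w"
    using perp_exists[OF assms] by blast
  let ?V = "Vs n m HZ"
  let ?A = "{r \<in> ?V. orth r w}"
  let ?B = "{r \<in> ?V. \<not> orth r w}"
  have fV: "finite ?V" unfolding Vs_def by (rule finite_subset[of _ "Pow {..<n}"]) auto
  have fw: "finite w" using assms(2) finite_subset by blast
  have cl: "vadd r r0 \<in> ?V" if "r \<in> ?V" for r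
  proof -
    have "r \<subseteq> {..<n}" using that unfolding Vs_def by auto
    moreover have "orth (vadd r r0) (HZ j)" if j: "j < m" and rV: "r \<in> ?V" for j
    proof -
      have fj: "finite (HZ j)" using assms(1) j finite_subset by blast
      have "orth (vadd r r0) (HZ j) = (orth (HZ j) r = orth (HZ j) r0)"
        using orth_vadd[OF fj] orth_sym by metis
      then show ?thesis using rV r0 j unfolding Vs_def by (auto simp: orth_sym)
    qed
    ultimately show ?thesis using that r0 vadd_sub unfolding Vs_def by auto
  qed
  have flip: "orth (vadd r r0) w = (\<not> orth r w)" for r
    using orth_vadd[OF fw, of r r0] r0(3) by (metis orth_sym)
  have "bij_betw (\<lambda>r. vadd r r0) ?A ?B"
  proof (rule bij_betw_byWitness[where f' = "\<lambda>r. vadd r r0"])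
    show "\<forall>a\<in>?A. vadd (vadd a r0) r0 = a" by (simp add: vadd_cancel)
    show "\<forall>a\<in>?B. vadd (vadd a r0) r0 = a" by (simp add: vadd_cancel)
    show "(\<lambda>r. vadd r r0) ` ?A \<subseteq> ?B" using cl flip by auto
    show "(\<lambda>r. vadd r r0) ` ?B \<subseteq> ?A" using cl flip by auto
  qed
  then have "card ?A = card ?B" by (rule bij_betw_same_card)
  moreover have "card ?V = card ?A + card ?B"
  proof -
    have "?V = ?A \<union> ?B" by auto
    moreover have "?A \<inter> ?B = {}" by auto
    ultimately show ?thesis using fV by (metis (no_types, lifting) card_Un_disjoint finite_Un)
  qed
  ultimately show ?thesis by simp
qed

lemma comp_eq:
  "{HX \<in> mats mX n. compat mX mZ HX HZ} = PiE {..<mX} (\<lambda>_. Vs n mZ HZ)"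
  unfolding mats_def compat_def Vs_def by (intro set_eqI) (simp add: PiE_iff Pow_def, blast)

lemma compw_eq:
  "{HX \<in> mats mX n. compat mX mZ HX HZ \<and> (\<forall>i<mX. orth (HX i) w)} = PiE {..<mX} (\<lambda>_. {r \<in> Vs n mZ HZ. orth r w})"
  unfolding mats_def compat_def Vs_def by (intro set_eqI) (simp add: PiE_iff Pow_def, blast)

lemma card_comp: "card {HX \<in> mats mX n. compat mX mZ HX HZ} = card (Vs n mZ HZ) ^ mX"
  unfolding comp_eq by (simp add: card_PiE)

lemma card_compw:
  assumes "\<forall>j<mZ. HZ j \<subseteq> {..<n}" "w \<subseteq> {..<n}" "w \<notin> rowspace mZ HZ"
  shows "real (card {HX \<in> mats mX n. compat mX mZ HX HZ \<and> (\<forall>i<mX. orth (HX i) w)})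
     = real (card {HX \<in> mats mX n. compat mX mZ HX HZ}) / 2 ^ mX"
proof -
  have "real (card {HX \<in> mats mX n. compat mX mZ HX HZ \<and> (\<forall>i<mX. orth (HX i) w)})
     = real (card {r \<in> Vs n mZ HZ. orth r w}) ^ mX"
    unfolding compw_eq by (simp add: card_PiE)
  also have "\<dots> = (real (card (Vs n mZ HZ)) / 2) ^ mX"
    using half_count[OF assms] by simp
  also have "\<dots> = real (card {HX \<in> mats mX n. compat mX mZ HX HZ}) / 2 ^ mX"
    unfolding card_comp by (simp add: power_divide)
  finally show ?thesis .
qed

lemma bind_ge:
  assumes "\<And>x. x \<in> set_pmf M \<Longrightarrow> c \<le> measure_pmf.prob (f x) A" "0 \<le> c"
  shows "c \<le> measure_pmf.prob (bind_pmf M f) A"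
proof -
  have "ennreal c \<le> (\<integral>\<^sup>+x. emeasure (f x) A \<partial>M)"
  proof (rule measure_pmf.nn_integral_ge_const)
    show "AE x in measure_pmf M. ennreal c \<le> emeasure (measure_pmf (f x)) A"
      using assms(1) by (auto simp: AE_measure_pmf_iff measure_pmf.emeasure_eq_measure)
  qed
  then have "ennreal c \<le> emeasure (bind_pmf M f) A" by simp
  then show ?thesis using assms(2)
    by (simp add: measure_pmf.emeasure_eq_measure)
qed

lemma card_small_subsets:
  assumes "finite Y"
  shows "card {T. T \<subseteq> Y \<and> card T \<le> K} \<le> 1 + card Y ^ K"
proof -
  let ?L = "{xs. set xs \<subseteq> Y \<and> length xs = K}"
  have sub: "{T. T \<subseteq> Y \<and> card T \<le> K} \<subseteq> insert {} (set ` ?L)"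
  proof
    fix T assume "T \<in> {T. T \<subseteq> Y \<and> card T \<le> K}"
    then have T: "T \<subseteq> Y" "card T \<le> K" by auto
    show "T \<in> insert {} (set ` ?L)"
    proof (cases "T = {}")
      case False
      have fT: "finite T" using T assms finite_subset by blast
      obtain xs where xs: "set xs = T" "distinct xs" using finite_distinct_list[OF fT] by blast
      have len: "length xs = card T" using distinct_card[OF xs(2)] xs(1) by simp
      have ne: "xs \<noteq> []" using xs False by auto
      let ?ys = "xs @ replicate (K - card T) (hd xs)"
      have "set ?ys = T" using xs ne by (auto simp: hd_in_set)
      moreover have "length ?ys = K" using len T by simp
      ultimately show ?thesis using T by blast
    qed simp
  qed
  have "card {T. T \<subseteq> Y \<and> card T \<le> K} \<le> card (insert {} (set ` ?L))"
    by (rule card_mono[OF _ sub]) (simp add: finite_lists_length_eq[OF assms])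
  also have "\<dots> \<le> 1 + card (set ` ?L)"
    using finite_lists_length_eq[OF assms, of K] by (simp add: card_insert_if)
  also have "\<dots> \<le> 1 + card ?L"
    using card_image_le[OF finite_lists_length_eq[OF assms]] by simp
  also have "\<dots> = 1 + card Y ^ K" by (simp add: card_lists_length_eq[OF assms])
  finally show ?thesis .
qed

lemma Yset_eq: "Yset n mZ HZ = (\<lambda>(j,i). HZ j \<inter> {..<i}) ` ({..<mZ} \<times> {1..n})"
  unfolding Yset_def by force

lemma Yset_finite: "finite (Yset n mZ HZ)"
  unfolding Yset_eq by simp

lemma Yset_card: "card (Yset n mZ HZ) \<le> mZ * n"
proof -
  have "card (Yset n mZ HZ) \<le> card ({..<mZ} \<times> {1..n})"
    unfolding Yset_eq by (rule card_image_le) simp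
  then show ?thesis by (simp add: card_cartesian_product)
qed

lemma Yset_sub: "HZ \<in> mats mZ n \<Longrightarrow> Yset n mZ HZ \<subseteq> Pow {..<n}"
  unfolding Yset_def mats_def by (auto simp: PiE_iff)

definition Sub where "Sub n mZ K HZ = {T. T \<subseteq> Yset n mZ HZ \<and> card T \<le> K}"

definition Good where
  "Good n mX mZ K = {(HX, HZ). HX \<in> mats mX n \<and> HZ \<in> mats mZ n \<and>
     (\<forall>T1\<in>Sub n mZ K HZ. \<forall>T2\<in>Sub n mZ K HZ.
        syndrome mX HX (xsum T1 id) = syndrome mX HX (xsum T2 id) \<longrightarrow>
        vadd (xsum T1 id) (xsum T2 id) \<in> rowspace mZ HZ)}"

lemma syn_orth:
  assumes "HX \<in> mats mX n" "syndrome mX HX a = syndrome mX HX b" "i < mX"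
  shows "orth (HX i) (vadd a b)"
proof -
  have "HX i \<subseteq> {..<n}" using assms unfolding mats_def by auto
  then have f: "finite (HX i)" using finite_subset by blast
  have "odd (card (HX i \<inter> a)) = odd (card (HX i \<inter> b))"
    using assms(2,3) unfolding syndrome_def set_eq_iff by blast
  then show ?thesis using orth_vadd[OF f] unfolding orth_def by simp
qed

lemma inner_prob:
  assumes HZ: "HZ \<in> mats mZ n"
  shows "1 - real (card (Sub n mZ K HZ)) ^ 2 / 2 ^ mX \<le>
     measure_pmf.prob (pmf_of_set {HX \<in> mats mX n. compat mX mZ HX HZ})
        {HX. (HX, HZ) \<in> Good n mX mZ K}"
proof -
  let ?C = "{HX \<in> mats mX n. compat mX mZ HX HZ}"
  let ?S = "{HX. (HX, HZ) \<in> Good n mX mZ K}"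
  let ?P = "Sub n mZ K HZ \<times> Sub n mZ K HZ"
  define w where "w p = vadd (xsum (fst p) id) (xsum (snd p) id)" for p :: "nat set set \<times> nat set set"
  define Bd where "Bd p = (if w p \<in> rowspace mZ HZ then {} else {HX \<in> mats mX n. compat mX mZ HX HZ \<and> (\<forall>i<mX. orth (HX i) (w p))})" for p
  have fC: "finite ?C" unfolding mats_def by (rule finite_subset[of _ "{..<mX} \<rightarrow>\<^sub>E Pow {..<n}"]) (auto intro: finite_PiE)
  have neC: "(\<lambda>i\<in>{..<mX}. {}) \<in> ?C" unfolding mats_def compat_def orth_def by auto
  then have cpos: "card ?C > 0" using fC card_gt_0_iff by blast
  have fSub: "finite (Sub n mZ K HZ)" unfolding Sub_def
    by (rule finite_subset[of _ "Pow (Yset n mZ HZ)"]) (auto simp: Yset_finite)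
  have fP: "finite ?P" using fSub by simp
  have hz: "\<forall>j<mZ. HZ j \<subseteq> {..<n}" using HZ unfolding mats_def by auto
  have wsub: "w p \<subseteq> {..<n}" if "p \<in> ?P" for p
  proof -
    have "fst p \<subseteq> Yset n mZ HZ" "snd p \<subseteq> Yset n mZ HZ" using that unfolding Sub_def by auto
    then have "fst p \<subseteq> Pow {..<n}" "snd p \<subseteq> Pow {..<n}" using Yset_sub[OF HZ] by blast+
    then show ?thesis unfolding w_def by (intro vadd_sub xsum_sub)
  qed
  have cover: "?C - ?S \<subseteq> (\<Union>p\<in>?P. Bd p)"
  proof
    fix HX assume a: "HX \<in> ?C - ?S"
    then have HX: "HX \<in> mats mX n" by auto
    from a obtain T1 T2 where T: "T1 \<in> Sub n mZ K HZ" "T2 \<in> Sub n mZ K HZ"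
      "syndrome mX HX (xsum T1 id) = syndrome mX HX (xsum T2 id)"
      "vadd (xsum T1 id) (xsum T2 id) \<notin> rowspace mZ HZ"
      using HZ unfolding Good_def by auto
    have "HX \<in> Bd (T1, T2)" unfolding Bd_def w_def using T a syn_orth[OF HX T(3)] by auto
    then show "HX \<in> (\<Union>p\<in>?P. Bd p)" using T by blast
  qed
  have bdc: "real (card (Bd p)) \<le> real (card ?C) / 2 ^ mX" if "p \<in> ?P" for p
  proof (cases "w p \<in> rowspace mZ HZ")
    case True then show ?thesis unfolding Bd_def by simp
  next
    case False
    then show ?thesis unfolding Bd_def using card_compw[OF hz wsub[OF that] False, of mX] by simp
  qed
  have fBd: "finite (Bd p)" for p unfolding Bd_def using fC by (auto intro: rev_finite_subset[OF fC])
  have "card (?C - ?S) \<le> card (\<Union>p\<in>?P. Bd p)"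
    by (rule card_mono[OF _ cover]) (use fP fBd in auto)
  also have "\<dots> \<le> (\<Sum>p\<in>?P. card (Bd p))" by (rule card_UN_le[OF fP])
  finally have "real (card (?C - ?S)) \<le> (\<Sum>p\<in>?P. real (card (Bd p)))"
    by (simp only: of_nat_sum[symmetric] of_nat_le_iff)
  also have "\<dots> \<le> (\<Sum>p\<in>?P. real (card ?C) / 2 ^ mX)" by (rule sum_mono) (use bdc in auto)
  also have "\<dots> = real (card (Sub n mZ K HZ)) ^ 2 * (real (card ?C) / 2 ^ mX)"
    by (simp add: card_cartesian_product power2_eq_square)
  finally have bad: "real (card (?C - ?S)) \<le> real (card (Sub n mZ K HZ)) ^ 2 * real (card ?C) / 2 ^ mX"
    by simp
  have split: "real (card ?C) = real (card (?C \<inter> ?S)) + real (card (?C - ?S))"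
    using card_Int_Diff[OF fC, of ?S] by simp
  have "measure_pmf.prob (pmf_of_set ?C) ?S = real (card (?C \<inter> ?S)) / real (card ?C)"
    using neC fC by (subst measure_pmf_of_set) auto
  also have "\<dots> = 1 - real (card (?C - ?S)) / real (card ?C)"
    using cpos split by (simp add: field_simps)
  also have "\<dots> \<ge> 1 - real (card (Sub n mZ K HZ)) ^ 2 / 2 ^ mX"
  proof -
    have "real (card (?C - ?S)) / real (card ?C) \<le> real (card (Sub n mZ K HZ)) ^ 2 / 2 ^ mX"
      using bad cpos by (simp add: divide_simps mult.commute)
    then show ?thesis by simp
  qed
  finally show ?thesis .
qed

lemma Yweight_enat:
  assumes "Yweight n mZ HZ e = enat k"
  shows "\<exists>T. T \<subseteq> Yset n mZ HZ \<and> finite T \<and> xsum T id = e \<and> card T = k"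
proof -
  let ?S = "{T. T \<subseteq> Yset n mZ HZ \<and> finite T \<and> xsum T id = e}"
  let ?A = "(\<lambda>T. enat (card T)) ` ?S"
  have eq: "Inf ?A = enat k" using assms unfolding Yweight_def by simp
  have ne: "?A \<noteq> {}"
  proof
    assume "?A = {}"
    then have "Inf ?A = \<infinity>" by (simp only: Inf_empty top_enat_def)
    then show False using eq by simp
  qed
  then obtain a where "a \<in> ?A" by blast
  then have "Inf ?A \<in> ?A" unfolding Inf_enat_def using LeastI[of "\<lambda>x. x \<in> ?A" a] by auto
  then show ?thesis using eq by auto
qed

lemma good_target:
  assumes K: "\<And>k::nat. real k \<le> B \<Longrightarrow> k \<le> K"
  shows "Good n mX mZ K \<subseteq> {(HX, HZ). \<exists>Dec. is_decoder n mX HX Dec \<and>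
          (\<forall>e \<subseteq> {..<n}. \<forall>k::nat. Yweight n mZ HZ e = enat k \<and> real k \<le> B \<longrightarrow>
             corrects mX mZ HX HZ Dec e)}"
proof (clarify)
  fix HX HZ assume G: "(HX, HZ) \<in> Good n mX mZ K"
  define P where "P g = (\<exists>T\<in>Sub n mZ K HZ. xsum T id = g)" for g
  define Dec where "Dec \<sigma> = (if \<exists>g. g \<subseteq> {..<n} \<and> syndrome mX HX g = \<sigma> \<and> P g
      then SOME g. g \<subseteq> {..<n} \<and> syndrome mX HX g = \<sigma> \<and> P g
      else SOME g. g \<subseteq> {..<n} \<and> syndrome mX HX g = \<sigma>)" for \<sigma>
  have dec: "Dec (syndrome mX HX e) \<subseteq> {..<n} \<and> syndrome mX HX (Dec (syndrome mX HX e)) = syndrome mX HX e"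
    if "e \<subseteq> {..<n}" for e
  proof (cases "\<exists>g. g \<subseteq> {..<n} \<and> syndrome mX HX g = syndrome mX HX e \<and> P g")
    case True
    then show ?thesis unfolding Dec_def by (simp, metis (mono_tags, lifting) someI_ex)
  next
    case False
    have "\<exists>g. g \<subseteq> {..<n} \<and> syndrome mX HX g = syndrome mX HX e" using that by blast
    then show ?thesis using False unfolding Dec_def by (simp, metis (mono_tags, lifting) someI_ex)
  qed
  have dec2: "P (Dec (syndrome mX HX e))" if "e \<subseteq> {..<n}" "P e" for e
  proof -
    have ex: "\<exists>g. g \<subseteq> {..<n} \<and> syndrome mX HX g = syndrome mX HX e \<and> P g" using that by blast
    then have "Dec (syndrome mX HX e) = (SOME g. g \<subseteq> {..<n} \<and> syndrome mX HX g = syndrome mX HX e \<and> P g)"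
      unfolding Dec_def by simp
    then show ?thesis using someI_ex[OF ex] by simp
  qed
  have "is_decoder n mX HX Dec" unfolding is_decoder_def using dec by blast
  moreover have "corrects mX mZ HX HZ Dec e"
    if e: "e \<subseteq> {..<n}" "Yweight n mZ HZ e = enat k" "real k \<le> B" for e k
  proof -
    obtain T where T: "T \<subseteq> Yset n mZ HZ" "xsum T id = e" "card T = k"
      using Yweight_enat[OF e(2)] by blast
    have T1: "T \<in> Sub n mZ K HZ" using T K[OF e(3)] unfolding Sub_def by auto
    then have "P e" unfolding P_def using T by blast
    then obtain T2 where T2: "T2 \<in> Sub n mZ K HZ" "xsum T2 id = Dec (syndrome mX HX e)"
      using dec2[OF e(1)] unfolding P_def by blast
    have "syndrome mX HX (xsum T id) = syndrome mX HX (xsum T2 id)" using T T2 dec[OF e(1)] by simp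
    then have "vadd (xsum T id) (xsum T2 id) \<in> rowspace mZ HZ" using G T1 T2 unfolding Good_def by blast
    then show ?thesis unfolding corrects_def using T T2 by simp
  qed
  ultimately show "\<exists>Dec. is_decoder n mX HX Dec \<and>
          (\<forall>e \<subseteq> {..<n}. \<forall>k::nat. Yweight n mZ HZ e = enat k \<and> real k \<le> B \<longrightarrow>
             corrects mX mZ HX HZ Dec e)" by blast
qed

lemma bind_ge':
  assumes "\<And>x. x \<in> set_pmf M \<Longrightarrow> c \<le> measure_pmf.prob (f x) A"
  shows "c \<le> measure_pmf.prob (bind_pmf M f) A"
proof (cases "c \<ge> 0")
  case True then show ?thesis using bind_ge[of M c f A] assms by blast
next
  case False then show ?thesis using measure_nonneg[of "measure_pmf (bind_pmf M f)" A] by linarith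
qed

lemma prob_good:
  shows "1 - real (1 + (mZ * n) ^ K) ^ 2 / 2 ^ mX \<le>
    measure_pmf.prob (do { HZ \<leftarrow> pmf_of_set (mats mZ n);
          HX \<leftarrow> pmf_of_set {HX \<in> mats mX n. compat mX mZ HX HZ};
          return_pmf (HX, HZ) }) (Good n mX mZ K)"
proof (rule bind_ge')
  fix HZ assume "HZ \<in> set_pmf (pmf_of_set (mats mZ n))"
  moreover have "mats mZ n \<noteq> {}" "finite (mats mZ n)" unfolding mats_def
    by (auto intro: finite_PiE simp: PiE_eq_empty_iff)
  ultimately have HZ: "HZ \<in> mats mZ n" by simp
  have "real (card (Sub n mZ K HZ)) \<le> real (1 + (mZ * n) ^ K)"
  proof -
    have "card (Sub n mZ K HZ) \<le> 1 + card (Yset n mZ HZ) ^ K"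
      unfolding Sub_def by (rule card_small_subsets[OF Yset_finite])
    also have "\<dots> \<le> 1 + (mZ * n) ^ K" using power_mono[OF Yset_card[of n mZ HZ], of K] by simp
    finally show ?thesis by (metis of_nat_le_iff)
  qed
  then have "real (card (Sub n mZ K HZ)) ^ 2 \<le> real (1 + (mZ * n) ^ K) ^ 2"
    by (intro power_mono) auto
  then have "1 - real (1 + (mZ * n) ^ K) ^ 2 / 2 ^ mX \<le> 1 - real (card (Sub n mZ K HZ)) ^ 2 / 2 ^ mX"
    by (simp add: divide_right_mono)
  also have "\<dots> \<le> measure_pmf.prob (pmf_of_set {HX \<in> mats mX n. compat mX mZ HX HZ})
        {HX. (HX, HZ) \<in> Good n mX mZ K}" by (rule inner_prob[OF HZ])
  also have "\<dots> = measure_pmf.prob (pmf_of_set {HX \<in> mats mX n. compat mX mZ HX HZ} \<bind> (\<lambda>HX. return_pmf (HX, HZ))) (Good n mX mZ K)"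
    by (simp add: map_pmf_def[symmetric] vimage_def)
  finally show "1 - real (1 + (mZ * n) ^ K) ^ 2 / 2 ^ mX \<le> measure_pmf.prob (pmf_of_set {HX \<in> mats mX n. compat mX mZ HX HZ} \<bind> (\<lambda>HX. return_pmf (HX, HZ))) (Good n mX mZ K)" .
qed

lemma arith_bound:
  fixes \<rho>X \<rho>Z :: real and n :: nat
  assumes "0 < \<rho>X" "0 < \<rho>Z" "\<rho>Z < 1/2" "n \<ge> 2" "\<rho>X * real n \<ge> 12"
  defines "K \<equiv> nat \<lfloor>\<rho>X / 8 * real n / log 2 (real n)\<rfloor>"
  shows "real (1 + (nrows \<rho>Z n * n) ^ K) ^ 2 / 2 ^ nrows \<rho>X n \<le> 2 powr (- (\<rho>X / 4) * real n)"
proof -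
  have nf: "real (nat \<lfloor>y\<rfloor>) \<le> y" if "y \<ge> 0" for y :: real
    using that by (simp add: of_nat_nat)
  have nf2: "real (nat \<lfloor>y\<rfloor>) \<ge> y - 1" if "y \<ge> 0" for y :: real
    using that by (simp add: of_nat_nat)
  define x where "x = real n"
  have x2: "x \<ge> 2" using assms(4) unfolding x_def by simp
  have lg: "log 2 x > 0" using x2 by simp
  have mZ: "real (nrows \<rho>Z n) \<le> x"
  proof -
    have "real (nrows \<rho>Z n) \<le> \<rho>Z * x" unfolding nrows_def x_def
      using assms(2) nf[of "\<rho>Z * real n"] by simp
    also have "\<dots> \<le> x" using assms(3) x2 by simp
    finally show ?thesis .
  qed
  have mX: "real (nrows \<rho>X n) \<ge> \<rho>X * x - 1" unfolding nrows_def x_def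
    using assms(1) nf2[of "\<rho>X * real n"] by simp
  have KL: "real K * log 2 x \<le> \<rho>X / 8 * x"
  proof -
    have "real K \<le> \<rho>X / 8 * x / log 2 x" unfolding K_def x_def
      using assms(1) x2 lg nf[of "\<rho>X / 8 * real n / log 2 (real n)"] unfolding x_def by simp
    then show ?thesis using lg by (simp add: field_simps)
  qed
  define L where "L = 2 * real K * log 2 x"
  have L0: "L \<ge> 0" unfolding L_def using lg by simp
  have LL: "L \<le> \<rho>X / 4 * x" using KL unfolding L_def by simp
  have h1: "real ((nrows \<rho>Z n * n) ^ K) \<le> 2 powr L"
  proof -
    have "real ((nrows \<rho>Z n * n) ^ K) = (real (nrows \<rho>Z n) * x) ^ K" unfolding x_def by simp
    also have "\<dots> \<le> (x * x) ^ K" using mZ x2 by (intro power_mono mult_right_mono) auto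
    also have "\<dots> = x powr (2 * real K)"
      using x2 by (simp add: powr_realpow[symmetric] power2_eq_square[symmetric] power_mult[symmetric] powr_def)
    also have "\<dots> = 2 powr L"
    proof -
      have "x = 2 powr (log 2 x)" using x2 by simp
      then have "x powr (2 * real K) = 2 powr (log 2 x * (2 * real K))" by (metis powr_powr)
      then show ?thesis unfolding L_def by (simp add: mult_ac)
    qed
    finally show ?thesis .
  qed
  have h2: "real (1 + (nrows \<rho>Z n * n) ^ K) \<le> 2 powr (L + 1)"
  proof -
    have "1 \<le> 2 powr L" using L0 by (simp add: ge_one_powr_ge_zero)
    then have "real (1 + (nrows \<rho>Z n * n) ^ K) \<le> 2 * 2 powr L" using h1 by simp
    also have "\<dots> = 2 powr (L + 1)" by (simp add: powr_add)
    finally show ?thesis .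
  qed
  have h3: "real (1 + (nrows \<rho>Z n * n) ^ K) ^ 2 \<le> 2 powr (2 * L + 2)"
  proof -
    have "real (1 + (nrows \<rho>Z n * n) ^ K) ^ 2 \<le> (2 powr (L + 1)) ^ 2"
      using h2 by (intro power_mono) auto
    also have "\<dots> = 2 powr (2 * L + 2)" unfolding power2_eq_square powr_add[symmetric] by (simp add: algebra_simps)
    finally show ?thesis .
  qed
  have h4: "(2::real) ^ nrows \<rho>X n = 2 powr real (nrows \<rho>X n)" by (simp add: powr_realpow)
  have "real (1 + (nrows \<rho>Z n * n) ^ K) ^ 2 / 2 ^ nrows \<rho>X n \<le> 2 powr (2 * L + 2) / 2 powr real (nrows \<rho>X n)"
    using h3 h4 by (simp add: divide_right_mono)
  also have "\<dots> = 2 powr (2 * L + 2 - real (nrows \<rho>X n))" by (simp add: powr_diff)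
  also have "\<dots> \<le> 2 powr (- (\<rho>X / 4) * real n)"
    using LL mX assms(5) unfolding x_def by (intro powr_mono) auto
  finally show ?thesis .
qed

theorem lemma25:
  fixes \<rho>X \<rho>Z :: real
  assumes "0 < \<rho>X" "\<rho>X < 1/2" "0 < \<rho>Z" "\<rho>Z < 1/2"
  shows "\<exists>c0 > 0. \<exists>c1 > 0. \<exists>N. \<forall>n \<ge> N.
    measure_pmf.prob (CSS n \<rho>X \<rho>Z)
      {(HX, HZ). \<exists>Dec. is_decoder n (nrows \<rho>X n) HX Dec \<and>
          (\<forall>e \<subseteq> {..<n}. \<forall>k::nat. Yweight n (nrows \<rho>Z n) HZ e = enat k \<and>
               real k \<le> c0 * real n / log 2 (real n) \<longrightarrow>
             corrects (nrows \<rho>X n) (nrows \<rho>Z n) HX HZ Dec e)}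
    \<ge> 1 - 2 powr (- c1 * real n)"
proof -
  have main: "\<forall>n \<ge> nat \<lceil>12 / \<rho>X\<rceil> + 2.
    measure_pmf.prob (CSS n \<rho>X \<rho>Z)
      {(HX, HZ). \<exists>Dec. is_decoder n (nrows \<rho>X n) HX Dec \<and>
          (\<forall>e \<subseteq> {..<n}. \<forall>k::nat. Yweight n (nrows \<rho>Z n) HZ e = enat k \<and>
               real k \<le> \<rho>X / 8 * real n / log 2 (real n) \<longrightarrow>
             corrects (nrows \<rho>X n) (nrows \<rho>Z n) HX HZ Dec e)}
    \<ge> 1 - 2 powr (- (\<rho>X / 4) * real n)"
  proof (intro allI impI)
  fix n assume nN: "nat \<lceil>12 / \<rho>X\<rceil> + 2 \<le> n"
  have n2: "n \<ge> 2" using nN by simp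
  have "12 / \<rho>X \<le> real n" using nN by linarith
  then have rn: "\<rho>X * real n \<ge> 12" using assms(1) by (simp add: field_simps)
  define K where "K = nat \<lfloor>\<rho>X / 8 * real n / log 2 (real n)\<rfloor>"
  let ?mX = "nrows \<rho>X n" and ?mZ = "nrows \<rho>Z n"
  let ?T = "{(HX, HZ). \<exists>Dec. is_decoder n (nrows \<rho>X n) HX Dec \<and>
          (\<forall>e \<subseteq> {..<n}. \<forall>k::nat. Yweight n (nrows \<rho>Z n) HZ e = enat k \<and>
               real k \<le> \<rho>X / 8 * real n / log 2 (real n) \<longrightarrow>
             corrects (nrows \<rho>X n) (nrows \<rho>Z n) HX HZ Dec e)}"
  have Kp: "k \<le> K" if "real k \<le> \<rho>X / 8 * real n / log 2 (real n)" for k :: nat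
    unfolding K_def using that by (simp add: le_nat_floor)
  have sub: "Good n ?mX ?mZ K \<subseteq> ?T" by (rule good_target[OF Kp])
  have "1 - 2 powr (- (\<rho>X / 4) * real n) \<le> 1 - real (1 + (?mZ * n) ^ K) ^ 2 / 2 ^ ?mX"
    using arith_bound[OF assms(1,3,4) n2 rn] unfolding K_def by simp
  also have "\<dots> \<le> measure_pmf.prob (CSS n \<rho>X \<rho>Z) (Good n ?mX ?mZ K)"
    unfolding CSS_def by (rule prob_good)
  also have "\<dots> \<le> measure_pmf.prob (CSS n \<rho>X \<rho>Z) ?T"
    by (rule measure_pmf.finite_measure_mono[OF sub]) simp
  finally show "1 - 2 powr (- (\<rho>X / 4) * real n) \<le> measure_pmf.prob (CSS n \<rho>X \<rho>Z) ?T" .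
  qed
  have pos: "\<rho>X / 8 > 0" "\<rho>X / 4 > 0" using assms by auto
  show ?thesis using main pos by blast
qed

end
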